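(* Let $S>0$, $\zeta\in\{0,1\}$, $\phi\in(-1,1)$, and let $(u_n)_{n\in\mathbb{N}}$ be the $\phi$-market impact scenario defined below. Then there exists $R>0$ such that for all $x\in(-R,R)$ the scenario starting from $x$ is regular, i.e. $N(x)=+\infty$, where $N(x):=\inf\{n\in\mathbb{N}: s_n(x)=-S\}$ with $\inf\emptyset=+\infty$.
   Context: Fix $S>0$, $\zeta\in\{0,1\}$ and $\phi\in\mathbb{R}$. For $a,b\in\mathbb{R}$ write $a\vee b=\max(a,b)$. The $\phi$-market impact scenario starting from $x\in\mathbb{R}$ is the sequence of real-valued functions $(u_n)_{n\in\mathbb{N}}$ defined by $u_0(x)=x\vee(-S)$ and, for all $n\in\mathbb{N}$, $u_{n+1}(x)=\Big(\phi\big(1+\tfrac{s_n(x)}{S}\big)^{1+\zeta}u_n(x)\Big)\vee\big(-s_n(x)-S\big)$, where $s_n(x)=\sum_{k=0}^n u_k(x)$. *)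

theory Defs
  imports Complex_Main
begin

fun mis_us :: "real \<Rightarrow> nat \<Rightarrow> real \<Rightarrow> real \<Rightarrow> nat \<Rightarrow> real \<times> real" where
  "mis_us S \<zeta> \<phi> x 0 = (max x (-S), max x (-S))"
| "mis_us S \<zeta> \<phi> x (Suc n) =
     (let (u, s) = mis_us S \<zeta> \<phi> x n;
          u' = max (\<phi> * (1 + s / S) ^ (1 + \<zeta>) * u) (- s - S)
      in (u', s + u'))"

definition mis_u :: "real \<Rightarrow> nat \<Rightarrow> real \<Rightarrow> real \<Rightarrow> nat \<Rightarrow> real" where
  "mis_u S \<zeta> \<phi> x n = fst (mis_us S \<zeta> \<phi> x n)"

definition mis_s :: "real \<Rightarrow> nat \<Rightarrow> real \<Rightarrow> real \<Rightarrow> nat \<Rightarrow> real" where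
  "mis_s S \<zeta> \<phi> x n = (\<Sum>k\<le>n. mis_u S \<zeta> \<phi> x k)"

definition regular_scenario :: "real \<Rightarrow> nat \<Rightarrow> real \<Rightarrow> real \<Rightarrow> bool" where
  "regular_scenario S \<zeta> \<phi> x \<longleftrightarrow> {n. mis_s S \<zeta> \<phi> x n = - S} = {}"

end

theory Submission
  imports Defs
begin

lemma snd_mis_us: "snd (mis_us S z p x n) = mis_s S z p x n"
  by (induction n) (auto simp: mis_s_def mis_u_def Let_def split: prod.splits)

lemma step_bound:
  fixes S \<phi> q \<delta> x s u :: real and \<zeta> :: nat
  assumes S: "S > 0" and z: "\<zeta> \<in> {0,1}" and d: "0 < \<delta>" "\<delta> \<le> 1/2"
    and q: "0 \<le> q" "q < 1" and qdef: "q = \<bar>\<phi>\<bar> * (1+\<delta>)^2"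
    and xR: "\<bar>x\<bar> < \<delta> * S * (1-q)"
    and inv: "(1-q)*\<bar>s\<bar> + q*\<bar>u\<bar> \<le> \<bar>x\<bar>"
  shows "\<bar>s\<bar> < \<delta>*S"
    and "(1-q)*\<bar>s + max (\<phi> * (1 + s / S) ^ (1 + \<zeta>) * u) (- s - S)\<bar>
          + q*\<bar>max (\<phi> * (1 + s / S) ^ (1 + \<zeta>) * u) (- s - S)\<bar> \<le> \<bar>x\<bar>"
proof -
  have qu0: "q*\<bar>u\<bar> \<ge> 0" using q by simp
  have "\<delta>*S*(1-q) = (1-q)*(\<delta>*S)" by (simp add: algebra_simps)
  hence "(1-q)*\<bar>s\<bar> < (1-q)*(\<delta>*S)" using inv xR qu0 by linarith
  then show sb: "\<bar>s\<bar> < \<delta>*S" using q by simp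
  define t where "t = 1 + s/S"
  have s1: "s < \<delta>*S" and s2: "-(\<delta>*S) < s" using sb by linarith+
  have a2: "s/S < \<delta>" unfolding pos_divide_less_eq[OF S] using s1 by linarith
  have a1: "-\<delta> < s/S" unfolding pos_less_divide_eq[OF S] using s2 by linarith
  have t0: "0 \<le> t" using a1 d unfolding t_def by linarith
  have t1: "t \<le> 1+\<delta>" using a2 unfolding t_def by linarith
  have "t^(1+\<zeta>) \<le> (1+\<delta>)^(1+\<zeta>)" by (rule power_mono[OF t1 t0])
  also have "\<dots> \<le> (1+\<delta>)^2" using z d by (intro power_increasing) auto
  finally have tp: "\<bar>t^(1+\<zeta>)\<bar> \<le> (1+\<delta>)^2" using t0 by simp
  define v where "v = \<phi> * t ^ (1 + \<zeta>) * u"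
  have "\<bar>v\<bar> = \<bar>\<phi>\<bar> * \<bar>t^(1+\<zeta>)\<bar> * \<bar>u\<bar>" by (simp add: v_def abs_mult)
  also have "\<dots> \<le> \<bar>\<phi>\<bar> * (1+\<delta>)^2 * \<bar>u\<bar>"
    by (intro mult_right_mono mult_left_mono tp) auto
  finally have vb: "\<bar>v\<bar> \<le> q*\<bar>u\<bar>" using qdef by simp
  have "(1-q)*\<bar>s\<bar> \<ge> 0" using q by simp
  hence "q*\<bar>u\<bar> \<le> \<bar>x\<bar>" using inv by linarith
  moreover have "\<delta>*S*(1-q) \<le> \<delta>*S" using d S q by (intro mult_left_le) auto
  ultimately have "q*\<bar>u\<bar> < \<delta>*S" using xR by linarith
  moreover have "\<delta>*S \<le> S*(1-\<delta>)" using d S by (simp add: algebra_simps) 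
  moreover have "-v \<le> q*\<bar>u\<bar>" using vb by (rule abs_le_D2)
  moreover have "S*(1-\<delta>) = S - \<delta>*S" by (simp add: algebra_simps)
  moreover have "s \<ge> -\<bar>s\<bar>" by simp
  ultimately have "v > -s - S" using sb by linarith
  hence m: "max (\<phi> * (1 + s / S) ^ (1 + \<zeta>) * u) (- s - S) = v" by (simp add: v_def t_def)
  have "(1-q)*\<bar>s+v\<bar> + q*\<bar>v\<bar> \<le> (1-q)*\<bar>s\<bar> + (1-q)*\<bar>v\<bar> + q*\<bar>v\<bar>"
  proof -
    have "(1-q)*\<bar>s+v\<bar> \<le> (1-q)*(\<bar>s\<bar>+\<bar>v\<bar>)" using q by (intro mult_left_mono abs_triangle_ineq) auto
    thus ?thesis by (simp add: distrib_left)
  qed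
  also have "\<dots> = (1-q)*\<bar>s\<bar> + \<bar>v\<bar>" by (simp add: algebra_simps)
  also have "\<dots> \<le> \<bar>x\<bar>" using vb inv by linarith
  finally show "(1-q)*\<bar>s + max (\<phi> * (1 + s / S) ^ (1 + \<zeta>) * u) (- s - S)\<bar>
          + q*\<bar>max (\<phi> * (1 + s / S) ^ (1 + \<zeta>) * u) (- s - S)\<bar> \<le> \<bar>x\<bar>" using m by simp
qed

theorem proposition4p3:
  fixes S \<phi> :: real and \<zeta> :: nat
  assumes "S > 0" and "\<zeta> \<in> {0, 1}" and "-1 < \<phi>" and "\<phi> < 1"
  shows "\<exists>R > 0. \<forall>x. -R < x \<and> x < R \<longrightarrow> regular_scenario S \<zeta> \<phi> x"
proof -
  define c where "c = \<bar>\<phi>\<bar>"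
  have c: "0 \<le> c" "c < 1" using assms by (auto simp: c_def)
  define \<delta> where "\<delta> = (1-c)/8"
  have d: "0 < \<delta>" "\<delta> \<le> 1/2" using c by (auto simp: \<delta>_def)
  define q where "q = c*(1+\<delta>)^2"
  have "(1+\<delta>)^2 \<le> 1 + 3*\<delta>" using d by (simp add: power2_eq_square algebra_simps)
  hence "q \<le> c*(1+3*\<delta>)" using c by (simp add: q_def mult_left_mono)
  also have "\<dots> < 1"
  proof -
    have "c*(3*\<delta>) \<le> 3*\<delta>" using c d by (intro mult_left_le_one_le) auto
    moreover have "c*(1+3*\<delta>) = c + c*(3*\<delta>)" by (simp add: algebra_simps)
    moreover have "3*\<delta> < 1 - c" using c by (simp add: \<delta>_def)
    ultimately show ?thesis by linarith
  qed
  finally have q: "0 \<le> q" "q < 1" using c by (auto simp: q_def)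
  define R where "R = \<delta>*S*(1-q)"
  have "R > 0" using d q assms by (simp add: R_def)
  moreover have "regular_scenario S \<zeta> \<phi> x" if "-R < x" "x < R" for x
  proof -
    have xR: "\<bar>x\<bar> < \<delta>*S*(1-q)" using that R_def by auto
    have "\<delta>*S*(1-q) \<le> \<delta>*S" using d assms q by (intro mult_left_le) auto
    moreover have "\<delta>*S \<le> S" using d assms by simp
    ultimately have "x > -S" using xR by linarith
    have I: "(1-q)*\<bar>snd (mis_us S \<zeta> \<phi> x n)\<bar> + q*\<bar>fst (mis_us S \<zeta> \<phi> x n)\<bar> \<le> \<bar>x\<bar>" for n
    proof (induction n)
      case 0
      then show ?case using \<open>x > -S\<close> by (simp add: algebra_simps)
    next
      case (Suc n)
      obtain u s where us: "mis_us S \<zeta> \<phi> x n = (u, s)" by force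
      show ?case using step_bound(2)[OF assms(1,2) d q _ xR, of \<phi> s u] Suc us
        by (simp add: q_def c_def Let_def)
    qed
    have "\<bar>mis_s S \<zeta> \<phi> x n\<bar> < \<delta>*S" for n
    proof -
      obtain u s where us: "mis_us S \<zeta> \<phi> x n = (u, s)" by force
      show ?thesis using step_bound(1)[OF assms(1,2) d q _ xR, of \<phi> s u] I[of n] us
          snd_mis_us[of S \<zeta> \<phi> x n]
        by (simp add: q_def c_def)
    qed
    moreover have "\<delta>*S < S" using d assms by simp
    ultimately have "mis_s S \<zeta> \<phi> x n \<noteq> - S" for n
      by (metis abs_minus_cancel abs_of_pos assms(1) order.strict_trans less_irrefl)
    thus ?thesis unfolding regular_scenario_def by auto
  qed
  ultimately show ?thesis by blast
qed

end
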